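(* Let $\mathsf{P}_N$ be a parameterized program (in the class described in the context) with pre-condition $\varphi(N)$ and post-condition $\psi(N)$, such that for every loop $L$ of $\mathsf{P}_N$ the quantity $c_L = k_L(N) - k_L(N-1)$ is a constant (independent of $N$). Let $\mathsf{P}^p_N$ be the program obtained from $\mathsf{P}_N$ by transforming every loop $L$ as follows: its termination condition $\ell < k_L(N)$ is replaced by $\ell < k_L(N-1)$, and the last $c_L$ iterations of $L$ are peeled, i.e. $c_L$ unrolled copies of the loop body (for loop counter values $\ell = k_L(N-1), \ldots, k_L(N)-1$) are inserted so that they execute immediately after the loop body has been iterated $k_L(N-1)$ times. Then $\{\varphi(N)\}\;\mathsf{P}_N\;\{\psi(N)\}$ holds iff $\{\varphi(N)\}\;\mathsf{P}^p_N\;\{\psi(N)\}$ holds.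
   Context: Programs are generated by the grammar: statements are scalar assignments $v := E$, array assignments $A[E] := E$, conditionals, sequential composition, and non-nested loops $\mathbf{for}(\ell := 0; \ell < E; \ell := \ell+1)\{S\}$ whose bodies contain no loops; expressions are built from array reads, scalar variables, loop counters, integer constants and the parameter $N$ using $+,-,*,/$; Boolean conditions are relational comparisons of expressions combined by AND, OR, NOT. $N$ is a positive integer parameter. Each loop $L$ has a unique loop counter $\ell$, initialized to $0$ at the start of the loop and incremented by $1$ at the end of each iteration and not otherwise updated; its bound $E$ is an expression in $N$, and $k_L(N)$ denotes the number of iterations of $L$ in the program with parameter $N$. A Hoare triple $\{\alpha\}\;\mathsf{Q}\;\{\beta\}$ holds if every execution of $\mathsf{Q}$ from a state satisfying $\alpha$ ends in a state satisfying $\beta$. *)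

theory Defs
  imports Main
begin

type_synonym vname = string
type_synonym aname = string
type_synonym lname = string

datatype aexp =
    Const int
  | Var vname
  | Ctr lname
  | ParN
  | Read aname aexp
  | Plus aexp aexp
  | Minus aexp aexp
  | Times aexp aexp
  | Div aexp aexp

datatype relop = Lt | Le | Eq | Ne | Gt | Ge

datatype bexp =
    Rel relop aexp aexp
  | And bexp bexp
  | Or bexp bexp
  | Not bexp

datatype com =
    Skip
  | Assign vname aexp
  | AAssign aname aexp aexp
  | If bexp com com
  | Seq com com
  | For lname aexp com   (* for (l := 0; l < E; l := l+1) { S } *)

text \<open>Program states consist of scalar variables and arrays. Loop counters are
  local to their loop and are kept in an environment.\<close>

record state =
  scal :: "vname \<Rightarrow> int"
  arr  :: "aname \<Rightarrow> int \<Rightarrow> int"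

fun aval :: "int \<Rightarrow> (lname \<Rightarrow> int) \<Rightarrow> state \<Rightarrow> aexp \<Rightarrow> int" where
  "aval N env s (Const c) = c"
| "aval N env s (Var x) = scal s x"
| "aval N env s (Ctr l) = env l"
| "aval N env s ParN = N"
| "aval N env s (Read a e) = arr s a (aval N env s e)"
| "aval N env s (Plus e1 e2) = aval N env s e1 + aval N env s e2"
| "aval N env s (Minus e1 e2) = aval N env s e1 - aval N env s e2"
| "aval N env s (Times e1 e2) = aval N env s e1 * aval N env s e2"
| "aval N env s (Div e1 e2) = aval N env s e1 div aval N env s e2"

fun rval :: "relop \<Rightarrow> int \<Rightarrow> int \<Rightarrow> bool" where
  "rval Lt a b = (a < b)"
| "rval Le a b = (a \<le> b)"
| "rval Eq a b = (a = b)"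
| "rval Ne a b = (a \<noteq> b)"
| "rval Gt a b = (a > b)"
| "rval Ge a b = (a \<ge> b)"

fun bval :: "int \<Rightarrow> (lname \<Rightarrow> int) \<Rightarrow> state \<Rightarrow> bexp \<Rightarrow> bool" where
  "bval N env s (Rel r e1 e2) = rval r (aval N env s e1) (aval N env s e2)"
| "bval N env s (And b1 b2) = (bval N env s b1 \<and> bval N env s b2)"
| "bval N env s (Or b1 b2) = (bval N env s b1 \<or> bval N env s b2)"
| "bval N env s (Not b) = (\<not> bval N env s b)"

inductive exec :: "int \<Rightarrow> (lname \<Rightarrow> int) \<Rightarrow> com \<Rightarrow> state \<Rightarrow> state \<Rightarrow> bool"
  and exec_loop :: "int \<Rightarrow> (lname \<Rightarrow> int) \<Rightarrow> lname \<Rightarrow> int \<Rightarrow> com \<Rightarrow> int \<Rightarrow> state \<Rightarrow> state \<Rightarrow> bool"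
where
  Skip: "exec N env Skip s s"
| Assign: "exec N env (Assign x e) s (s\<lparr>scal := (scal s)(x := aval N env s e)\<rparr>)"
| AAssign: "exec N env (AAssign a i e) s
     (s\<lparr>arr := (arr s)(a := (arr s a)(aval N env s i := aval N env s e))\<rparr>)"
| IfT: "bval N env s b \<Longrightarrow> exec N env c1 s t \<Longrightarrow> exec N env (If b c1 c2) s t"
| IfF: "\<not> bval N env s b \<Longrightarrow> exec N env c2 s t \<Longrightarrow> exec N env (If b c1 c2) s t"
| Seq: "exec N env c1 s u \<Longrightarrow> exec N env c2 u t \<Longrightarrow> exec N env (Seq c1 c2) s t"
| For: "exec_loop N env l (aval N env s E) c 0 s t \<Longrightarrow> exec N env (For l E c) s t"
| LoopStop: "\<not> i < bnd \<Longrightarrow> exec_loop N env l bnd c i s s"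
| LoopStep: "i < bnd \<Longrightarrow> exec N (env(l := i)) c s u \<Longrightarrow> exec_loop N env l bnd c (i + 1) u t
     \<Longrightarrow> exec_loop N env l bnd c i s t"

text \<open>(The loop bound is an expression in N only, hence constant during the loop.)\<close>

definition hoare :: "int \<Rightarrow> (state \<Rightarrow> bool) \<Rightarrow> com \<Rightarrow> (state \<Rightarrow> bool) \<Rightarrow> bool" where
  "hoare N \<alpha> Q \<beta> \<longleftrightarrow> (\<forall>s t. \<alpha> s \<longrightarrow> exec N (\<lambda>_. 0) Q s t \<longrightarrow> \<beta> t)"

fun ctrs_a :: "aexp \<Rightarrow> lname set" where
  "ctrs_a (Const c) = {}"
| "ctrs_a (Var x) = {}"
| "ctrs_a (Ctr l) = {l}"
| "ctrs_a ParN = {}"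
| "ctrs_a (Read a e) = ctrs_a e"
| "ctrs_a (Plus e1 e2) = ctrs_a e1 \<union> ctrs_a e2"
| "ctrs_a (Minus e1 e2) = ctrs_a e1 \<union> ctrs_a e2"
| "ctrs_a (Times e1 e2) = ctrs_a e1 \<union> ctrs_a e2"
| "ctrs_a (Div e1 e2) = ctrs_a e1 \<union> ctrs_a e2"

fun ctrs_b :: "bexp \<Rightarrow> lname set" where
  "ctrs_b (Rel r e1 e2) = ctrs_a e1 \<union> ctrs_a e2"
| "ctrs_b (And b1 b2) = ctrs_b b1 \<union> ctrs_b b2"
| "ctrs_b (Or b1 b2) = ctrs_b b1 \<union> ctrs_b b2"
| "ctrs_b (Not b) = ctrs_b b"

fun ctrs_c :: "com \<Rightarrow> lname set" where
  "ctrs_c Skip = {}"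
| "ctrs_c (Assign x e) = ctrs_a e"
| "ctrs_c (AAssign a i e) = ctrs_a i \<union> ctrs_a e"
| "ctrs_c (If b c1 c2) = ctrs_b b \<union> ctrs_c c1 \<union> ctrs_c c2"
| "ctrs_c (Seq c1 c2) = ctrs_c c1 \<union> ctrs_c c2"
| "ctrs_c (For l E c) = ctrs_a E \<union> ctrs_c c"

fun is_Nexp :: "aexp \<Rightarrow> bool" where
  "is_Nexp (Const c) = True"
| "is_Nexp ParN = True"
| "is_Nexp (Plus e1 e2) = (is_Nexp e1 \<and> is_Nexp e2)"
| "is_Nexp (Minus e1 e2) = (is_Nexp e1 \<and> is_Nexp e2)"
| "is_Nexp (Times e1 e2) = (is_Nexp e1 \<and> is_Nexp e2)"
| "is_Nexp (Div e1 e2) = (is_Nexp e1 \<and> is_Nexp e2)"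
| "is_Nexp _ = False"

fun loop_free :: "com \<Rightarrow> bool" where
  "loop_free (For l E c) = False"
| "loop_free (If b c1 c2) = (loop_free c1 \<and> loop_free c2)"
| "loop_free (Seq c1 c2) = (loop_free c1 \<and> loop_free c2)"
| "loop_free _ = True"

fun loop_ctrs :: "com \<Rightarrow> lname list" where
  "loop_ctrs (For l E c) = l # loop_ctrs c"
| "loop_ctrs (If b c1 c2) = loop_ctrs c1 @ loop_ctrs c2"
| "loop_ctrs (Seq c1 c2) = loop_ctrs c1 @ loop_ctrs c2"
| "loop_ctrs _ = []"

fun wf_com :: "com \<Rightarrow> bool" where
  "wf_com Skip = True"
| "wf_com (Assign x e) = (ctrs_a e = {})"
| "wf_com (AAssign a i e) = (ctrs_a i = {} \<and> ctrs_a e = {})"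
| "wf_com (If b c1 c2) = (ctrs_b b = {} \<and> wf_com c1 \<and> wf_com c2)"
| "wf_com (Seq c1 c2) = (wf_com c1 \<and> wf_com c2)"
| "wf_com (For l E c) = (is_Nexp E \<and> loop_free c \<and> ctrs_c c \<subseteq> {l})"

definition wf_prog :: "com \<Rightarrow> bool" where
  "wf_prog P \<longleftrightarrow> wf_com P \<and> distinct (loop_ctrs P)"

text \<open>Value of an expression in N (the loop bound); the environment and state
  are irrelevant for expressions in N.\<close>
definition Nval :: "int \<Rightarrow> aexp \<Rightarrow> int" where
  "Nval N E = aval N (\<lambda>_. 0) \<lparr>scal = (\<lambda>_. 0), arr = (\<lambda>_ _. 0)\<rparr> E"

text \<open>Number of iterations k_L(N) of a loop with bound E.\<close>
definition iters :: "aexp \<Rightarrow> int \<Rightarrow> nat" where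
  "iters E N = nat (Nval N E)"

fun loops :: "com \<Rightarrow> (lname \<times> aexp \<times> com) list" where
  "loops (For l E c) = [(l, E, c)]"
| "loops (If b c1 c2) = loops c1 @ loops c2"
| "loops (Seq c1 c2) = loops c1 @ loops c2"
| "loops _ = []"

fun substN :: "aexp \<Rightarrow> aexp" where
  "substN ParN = Minus ParN (Const 1)"
| "substN (Read a e) = Read a (substN e)"
| "substN (Plus e1 e2) = Plus (substN e1) (substN e2)"
| "substN (Minus e1 e2) = Minus (substN e1) (substN e2)"
| "substN (Times e1 e2) = Times (substN e1) (substN e2)"
| "substN (Div e1 e2) = Div (substN e1) (substN e2)"
| "substN e = e"

fun subst_a :: "lname \<Rightarrow> int \<Rightarrow> aexp \<Rightarrow> aexp" where
  "subst_a l v (Ctr l') = (if l' = l then Const v else Ctr l')"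
| "subst_a l v (Read a e) = Read a (subst_a l v e)"
| "subst_a l v (Plus e1 e2) = Plus (subst_a l v e1) (subst_a l v e2)"
| "subst_a l v (Minus e1 e2) = Minus (subst_a l v e1) (subst_a l v e2)"
| "subst_a l v (Times e1 e2) = Times (subst_a l v e1) (subst_a l v e2)"
| "subst_a l v (Div e1 e2) = Div (subst_a l v e1) (subst_a l v e2)"
| "subst_a l v e = e"

fun subst_b :: "lname \<Rightarrow> int \<Rightarrow> bexp \<Rightarrow> bexp" where
  "subst_b l v (Rel r e1 e2) = Rel r (subst_a l v e1) (subst_a l v e2)"
| "subst_b l v (And b1 b2) = And (subst_b l v b1) (subst_b l v b2)"
| "subst_b l v (Or b1 b2) = Or (subst_b l v b1) (subst_b l v b2)"
| "subst_b l v (Not b) = Not (subst_b l v b)"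

fun subst_c :: "lname \<Rightarrow> int \<Rightarrow> com \<Rightarrow> com" where
  "subst_c l v Skip = Skip"
| "subst_c l v (Assign x e) = Assign x (subst_a l v e)"
| "subst_c l v (AAssign a i e) = AAssign a (subst_a l v i) (subst_a l v e)"
| "subst_c l v (If b c1 c2) = If (subst_b l v b) (subst_c l v c1) (subst_c l v c2)"
| "subst_c l v (Seq c1 c2) = Seq (subst_c l v c1) (subst_c l v c2)"
| "subst_c l v (For l' E c) = For l' (subst_a l v E) (subst_c l v c)"

definition seqs :: "com list \<Rightarrow> com" where
  "seqs cs = foldr Seq cs Skip"

fun peel :: "int \<Rightarrow> com \<Rightarrow> com" where
  "peel N (For l E c) =
     Seq (For l (substN E) c)
         (seqs (map (\<lambda>i. subst_c l (int i) c) [iters E (N - 1) ..< iters E N]))"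
| "peel N (If b c1 c2) = If b (peel N c1) (peel N c2)"
| "peel N (Seq c1 c2) = Seq (peel N c1) (peel N c2)"
| "peel N c = c"

end

theory Submission
  imports Defs
begin

inductive_cases SkipE[elim!]: "exec N env Skip s t"
inductive_cases AssignE[elim!]: "exec N env (Assign x e) s t"
inductive_cases AAssignE[elim!]: "exec N env (AAssign a i e) s t"
inductive_cases IfE[elim!]: "exec N env (If b c1 c2) s t"
inductive_cases SeqE[elim!]: "exec N env (Seq c1 c2) s t"
inductive_cases ForE[elim!]: "exec N env (For l E c) s t"
inductive_cases LoopE: "exec_loop N env l b c i s t"

lemma seq_iff: "exec N env (Seq c1 c2) s t \<longleftrightarrow> (\<exists>u. exec N env c1 s u \<and> exec N env c2 u t)"
  by (auto intro: exec_exec_loop.intros)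

lemma subst_a_aval: "env' = env(l:=v) \<Longrightarrow> aval N env s (subst_a l v e) = aval N env' s e"
  by (induction e) auto

lemma subst_b_bval: "env' = env(l:=v) \<Longrightarrow> bval N env s (subst_b l v b) = bval N env' s b"
  by (induction b) (simp_all add: subst_a_aval)

lemma subst_exec: "loop_free c \<Longrightarrow> env' = env(l:=v) \<Longrightarrow>
  exec N env (subst_c l v c) s t \<longleftrightarrow> exec N env' c s t"
proof (induction c arbitrary: s t)
  case Skip then show ?case by (auto intro: exec_exec_loop.intros)
next
  case (Assign x e)
  have e: "aval N env s (subst_a l v e) = aval N env' s e" by (rule subst_a_aval[OF Assign.prems(2)])
  have 1: "exec N env (Assign x (subst_a l v e)) s t \<longleftrightarrow> t = s\<lparr>scal := (scal s)(x := aval N env s (subst_a l v e))\<rparr>"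
    by (auto intro: exec_exec_loop.intros)
  have 2: "exec N env' (Assign x e) s t \<longleftrightarrow> t = s\<lparr>scal := (scal s)(x := aval N env' s e)\<rparr>"
    by (auto intro: exec_exec_loop.intros)
  show ?case using 1 2 e by simp
next
  case (AAssign a i e)
  have e: "aval N env s (subst_a l v e) = aval N env' s e" by (rule subst_a_aval[OF AAssign.prems(2)])
  have i: "aval N env s (subst_a l v i) = aval N env' s i" by (rule subst_a_aval[OF AAssign.prems(2)])
  have 1: "exec N env (AAssign a (subst_a l v i) (subst_a l v e)) s t \<longleftrightarrow> t = s\<lparr>arr := (arr s)(a := (arr s a)(aval N env s (subst_a l v i) := aval N env s (subst_a l v e)))\<rparr>"
    by (auto intro: exec_exec_loop.intros)
  have 2: "exec N env' (AAssign a i e) s t \<longleftrightarrow> t = s\<lparr>arr := (arr s)(a := (arr s a)(aval N env' s i := aval N env' s e))\<rparr>"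
    by (auto intro: exec_exec_loop.intros)
  show ?case using 1 2 e i by simp
next
  case (If b c1 c2)
  have bb: "bval N env s (subst_b l v b) = bval N env' s b" by (rule subst_b_bval[OF If.prems(2)])
  have IH1: "exec N env (subst_c l v c1) s t \<longleftrightarrow> exec N env' c1 s t" using If by simp
  have IH2: "exec N env (subst_c l v c2) s t \<longleftrightarrow> exec N env' c2 s t" using If by simp
  have 1: "exec N env (If (subst_b l v b) (subst_c l v c1) (subst_c l v c2)) s t \<longleftrightarrow>
     (if bval N env s (subst_b l v b) then exec N env (subst_c l v c1) s t else exec N env (subst_c l v c2) s t)"
    by (auto intro: exec_exec_loop.intros)
  have 2: "exec N env' (If b c1 c2) s t \<longleftrightarrow>
     (if bval N env' s b then exec N env' c1 s t else exec N env' c2 s t)"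
    by (auto intro: exec_exec_loop.intros)
  show ?case using 1 2 bb IH1 IH2 by simp
next
  case (Seq c1 c2) then show ?case
    by (auto intro: exec_exec_loop.intros)
next
  case (For l E c) then show ?case by simp
qed

lemma seqs_Nil: "exec N env (seqs []) s t \<longleftrightarrow> s = t"
  by (auto simp: seqs_def intro: exec_exec_loop.intros)

lemma seqs_Cons: "exec N env (seqs (c # cs)) s t \<longleftrightarrow> (\<exists>u. exec N env c s u \<and> exec N env (seqs cs) u t)"
  by (auto simp: seqs_def intro: exec_exec_loop.intros)

lemma seqs_append: "exec N env (seqs (xs @ ys)) s t \<longleftrightarrow>
   (\<exists>u. exec N env (seqs xs) s u \<and> exec N env (seqs ys) u t)"
  by (induction xs arbitrary: s) (auto simp: seqs_Nil seqs_Cons)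

lemma loop_seqs:
  assumes "loop_free c"
  shows "exec_loop N env l (int b) c (int i) s t \<longleftrightarrow>
    exec N env (seqs (map (\<lambda>j. subst_c l (int j) c) [i..<b])) s t"
proof (induction "b - i" arbitrary: i s)
  case 0
  then have "\<not> int i < int b" by simp
  then show ?case using 0
    by (auto simp: seqs_Nil intro: exec_exec_loop.intros elim: LoopE)
next
  case (Suc k)
  then have lt: "i < b" by simp
  have IH: "exec_loop N env l (int b) c (int i + 1) u t \<longleftrightarrow>
    exec N env (seqs (map (\<lambda>j. subst_c l (int j) c) [Suc i..<b])) u t" for u
    using Suc(1)[of "Suc i"] Suc(2) by (simp add: add.commute)
  have "[i..<b] = i # [Suc i..<b]" using lt by (simp add: upt_conv_Cons)
  show ?case
  proof -
    have "exec_loop N env l (int b) c (int i) s t \<longleftrightarrow>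
      (\<exists>u. exec N (env(l := int i)) c s u \<and> exec_loop N env l (int b) c (int i + 1) u t)"
      using lt by (auto intro: exec_exec_loop.intros elim: LoopE)
    also have "\<dots> \<longleftrightarrow> (\<exists>u. exec N env (subst_c l (int i) c) s u \<and>
       exec N env (seqs (map (\<lambda>j. subst_c l (int j) c) [Suc i..<b])) u t)"
      using IH subst_exec[OF assms refl] by simp
    finally show ?thesis using \<open>[i..<b] = i # [Suc i..<b]\<close> by (simp add: seqs_Cons)
  qed
qed

lemma loop_stop: "\<not> i < b \<Longrightarrow> exec_loop N env l b c i s t \<longleftrightarrow> t = s"
  by (auto intro: exec_exec_loop.intros elim: LoopE)

lemma loop_nat: "exec_loop N env l b c 0 s t \<longleftrightarrow> exec_loop N env l (int (nat b)) c 0 s t"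
  by (cases "b \<ge> 0") (simp_all add: loop_stop)

lemma substN_aval: "aval N env s (substN e) = aval (N - 1) env s e"
  by (induction e) auto

lemma Nexp_aval: "is_Nexp e \<Longrightarrow> aval N env s e = aval N env' s' e"
  by (induction e) auto

lemma aux_contra: "(X::int) \<le> P * -1 \<Longrightarrow> 0 \<le> a \<Longrightarrow> P = k + 1 \<Longrightarrow> a = k + X \<Longrightarrow> False"
  by simp

lemma iters_mono:
  assumes "\<forall>M :: int. M \<ge> 1 \<longrightarrow> int (iters E M) - int (iters E (M - 1)) = cL"
    and "N \<ge> 1"
  shows "iters E (N - 1) \<le> iters E N"
proof (rule ccontr)
  assume "\<not> ?thesis"
  then have neg: "cL < 0" using assms by force
  have "int (iters E (N - 1 + int n)) = int (iters E (N - 1)) + int n * cL" for n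
  proof (induction n)
    case (Suc n)
    have "int (iters E (N + int n)) - int (iters E (N + int n - 1)) = cL"
      using assms by simp
    then show ?case using Suc by (simp add: algebra_simps)
  qed simp
  from this[of "Suc (iters E (N - 1))"] have e:
    "int (iters E (N - 1 + int (Suc (iters E (N - 1))))) = int (iters E (N - 1)) + int (Suc (iters E (N - 1))) * cL" .
  have "int (Suc (iters E (N - 1))) * cL \<le> int (Suc (iters E (N - 1))) * (-1)"
    using neg by (intro mult_left_mono) auto
  moreover have "0 \<le> int (iters E (N - 1 + int (Suc (iters E (N - 1)))))" by simp
  moreover have "int (Suc (iters E (N - 1))) = int (iters E (N - 1)) + 1" by simp
  ultimately show False using e aux_contra by blast
qed

lemma main:
  "wf_com P \<Longrightarrow> (\<forall>(l, E, c) \<in> set (loops P). \<exists>cL :: int. \<forall>M :: int. M \<ge> 1 \<longrightarrow>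
           int (iters E M) - int (iters E (M - 1)) = cL) \<Longrightarrow> N \<ge> 1 \<Longrightarrow>
   exec N env P s t \<longleftrightarrow> exec N env (peel N P) s t"
proof (induction P arbitrary: s t)
  case Skip then show ?case by simp
next
  case (Assign x e) then show ?case by simp
next
  case (AAssign a i e) then show ?case by simp
next
  case (If b c1 c2) then show ?case
    by (auto intro: exec_exec_loop.intros)
next
  case (Seq c1 c2) then show ?case
    by (auto intro: exec_exec_loop.intros)
next
  case (For l E c)
  then have nE: "is_Nexp E" and lf: "loop_free c" by auto
  from For.prems(2) obtain cL where "\<forall>M :: int. M \<ge> 1 \<longrightarrow> int (iters E M) - int (iters E (M - 1)) = cL"
    by auto
  from iters_mono[OF this For.prems(3)] have mono: "iters E (N - 1) \<le> iters E N" .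
  have a1: "aval N env s E = Nval N E" unfolding Nval_def by (rule Nexp_aval[OF nE])
  have a2: "aval (N - 1) env s E = Nval (N - 1) E" unfolding Nval_def by (rule Nexp_aval[OF nE])
  have b1: "int (nat (aval N env s E)) = int (iters E N)"
    using a1 by (simp add: iters_def)
  have b2: "int (nat (aval N env s (substN E))) = int (iters E (N - 1))"
    using a2 by (simp add: iters_def substN_aval)
  let ?f = "\<lambda>j. subst_c l (int j) c"
  have "exec N env (For l E c) s t \<longleftrightarrow> exec_loop N env l (aval N env s E) c 0 s t"
    by (auto intro: exec_exec_loop.intros)
  also have "\<dots> \<longleftrightarrow> exec N env (seqs (map ?f [0..<iters E N])) s t"
    using loop_nat[of N env l "aval N env s E"] b1 loop_seqs[OF lf, of N env l "iters E N" 0] by simp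
  also have "[0..<iters E N] = [0..<iters E (N-1)] @ [iters E (N-1)..<iters E N]"
  proof -
    obtain d where eq: "iters E N = iters E (N-1) + d" using mono le_Suc_ex by blast
    show ?thesis unfolding eq by (rule upt_add_eq_append[OF le0])
  qed
  also have "exec N env (seqs (map ?f \<dots>)) s t \<longleftrightarrow>
     (\<exists>u. exec N env (seqs (map ?f [0..<iters E (N-1)])) s u \<and>
          exec N env (seqs (map ?f [iters E (N-1)..<iters E N])) u t)"
    by (simp add: seqs_append)
  also have "\<dots> \<longleftrightarrow> (\<exists>u. exec N env (For l (substN E) c) s u \<and>
          exec N env (seqs (map ?f [iters E (N-1)..<iters E N])) u t)"
  proof -
    have "exec N env (For l (substN E) c) s u \<longleftrightarrow> exec N env (seqs (map ?f [0..<iters E (N-1)])) s u" for u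
    proof -
      have "exec N env (For l (substN E) c) s u \<longleftrightarrow> exec_loop N env l (aval N env s (substN E)) c 0 s u"
        by (auto intro: exec_exec_loop.intros)
      also have "\<dots> \<longleftrightarrow> exec N env (seqs (map ?f [0..<iters E (N-1)])) s u"
        using loop_nat[of N env l "aval N env s (substN E)"] b2
          loop_seqs[OF lf, of N env l "iters E (N-1)" 0] by simp
      finally show ?thesis .
    qed
    then show ?thesis by simp
  qed
  also have "\<dots> \<longleftrightarrow> exec N env (peel N (For l E c)) s t"
    by (simp only: peel.simps seq_iff)
  finally show ?case .
qed

theorem lemma1:
  fixes P :: com and \<phi> \<psi> :: "int \<Rightarrow> state \<Rightarrow> bool" and N :: int
  assumes "wf_prog P"
    and "\<forall>(l, E, c) \<in> set (loops P). \<exists>cL :: int. \<forall>M :: int. M \<ge> 1 \<longrightarrow>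
           int (iters E M) - int (iters E (M - 1)) = cL"
    and "N \<ge> 1"
  shows "hoare N (\<phi> N) P (\<psi> N) \<longleftrightarrow> hoare N (\<phi> N) (peel N P) (\<psi> N)"
  using main[of P N] assms unfolding hoare_def wf_prog_def by simp

end
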